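(* Let $p$ be a prime and $f>1$ an integer, and let $l=f$ if $f$ is odd and $l=2f$ if $f$ is even. Define $\boldsymbol{\mu}=(\mu_0(x),\dots,\mu_{f-1}(x))$ by $\mu_0(x)=x-1$, $\mu_1(x)=p-2-x$, and $\mu_j(x)=p-1-x$ for $2\leq j\leq f-1$. Let $\boldsymbol{\mu}^{(0)}=(x,\dots,x)$ and $\boldsymbol{\mu}^{(k)}=g^{k-1}\boldsymbol{\mu}\circ g^{k-2}\boldsymbol{\mu}\circ\cdots\circ g\boldsymbol{\mu}\circ\boldsymbol{\mu}$ for $1\leq k\leq l$. For $0\leq k\leq l$ let $\boldsymbol{m}^{(k)}\in(\mathbb{Z}/2\mathbb{Z})^f$ be the tuple whose $j$-th entry is $0$ if the coefficient of $x$ in $\mu^{(k)}_j(x)$ is $+1$ and is $1$ if it is $-1$. Then: (1) for all $1\leq k\leq l$, $\boldsymbol{m}^{(k)}=g^k\boldsymbol{m}^{(l-k)}$; (2) for $1\leq k_1,k_2\leq l-1$ with $k_1\neq k_2$, the tuples $\boldsymbol{m}^{(k_1)}$ and $\boldsymbol{m}^{(k_2)}$ are cyclic permutations of each other if and only if $k_2=l-k_1$; (3) for $1\leq k\leq l-1$, with $k\neq l/2$ when $f$ is even, $\boldsymbol{m}^{(k)}$ is not equal to any of its non-trivial cyclic permutations.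
   Context: $(\mathbb{Z}\pm x)^f$ denotes the set of $f$-tuples $\boldsymbol{\lambda}=(\lambda_0(x),\dots,\lambda_{f-1}(x))$ of polynomials of the form $a\pm x$ with $a\in\mathbb{Z}$, indices taken in $\{0,\dots,f-1\}$. Composition is componentwise: $\boldsymbol{\lambda}\circ\boldsymbol{\lambda}'=(\lambda_0(\lambda'_0(x)),\dots,\lambda_{f-1}(\lambda'_{f-1}(x)))$. The cyclic shift $g$ acts on $f$-tuples (of polynomials or of elements of $\mathbb{Z}/2\mathbb{Z}$) by $(g\boldsymbol{\lambda})_j=\lambda_{j+1}$, indices modulo $f$. Equivalently, $\mu^{(k)}_j=\mu^{(k-1)}_j-1$ if $j\equiv 1-k \pmod f$, $\mu^{(k)}_j=p-2-\mu^{(k-1)}_j$ if $j\equiv 2-k\pmod f$, and $\mu^{(k)}_j=p-1-\mu^{(k-1)}_j$ otherwise. *)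

theory Defs
  imports Main "HOL-Computational_Algebra.Primes"
begin

text \<open>An element a + s*x of (Z \<pm> x) is represented by the pair (a, s) with s \<in> {1,-1}.
  f-tuples are lists of length f; the cyclic shift g is rotate1, so g^k = rotate k.\<close>

type_synonym linpoly = "int \<times> int"

definition lcomp :: "linpoly \<Rightarrow> linpoly \<Rightarrow> linpoly" where
  "lcomp l l' = (fst l + snd l * fst l', snd l * snd l')"

definition tcomp :: "linpoly list \<Rightarrow> linpoly list \<Rightarrow> linpoly list" where
  "tcomp xs ys = map2 lcomp xs ys"

definition mu :: "nat \<Rightarrow> nat \<Rightarrow> linpoly list" where
  "mu p f = map (\<lambda>j. if j = 0 then (-1, 1)
                     else if j = 1 then (int p - 2, -1)
                     else (int p - 1, -1)) [0..<f]"

fun mu_pow :: "nat \<Rightarrow> nat \<Rightarrow> nat \<Rightarrow> linpoly list" where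
  "mu_pow p f 0 = replicate f (0, 1)"
| "mu_pow p f (Suc k) = tcomp (rotate k (mu p f)) (mu_pow p f k)"

definition m_tup :: "nat \<Rightarrow> nat \<Rightarrow> nat \<Rightarrow> nat list" where
  "m_tup p f k = map (\<lambda>q. if snd q = 1 then 0 else 1) (mu_pow p f k)"

definition ell :: "nat \<Rightarrow> nat" where
  "ell f = (if odd f then f else 2 * f)"

end

theory Submission
  imports Defs
begin


definition cc :: "nat \<Rightarrow> nat \<Rightarrow> nat \<Rightarrow> nat" where
  "cc f k j = (if j = 0 then (if k = 0 then 0 else if k \<le> f then 1 else 2)
     else (if k + j \<le> f then 0 else if k + j \<le> 2*f then 1 else 2))"

lemma len_mu_pow: "length (mu_pow p f k) = f"
  by (induction k) (auto simp: tcomp_def mu_def)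

lemma mod0_iff: assumes "(0::nat) < f" "n < 3*f" shows "(n mod f = 0) = (n = 0 \<or> n = f \<or> n = 2*f)"
proof
  assume "n mod f = 0"
  then obtain q where q: "n = f*q" by auto
  with assms have "q < 3" by auto
  then have "q = 0 \<or> q = 1 \<or> q = 2" by auto
  with q show "n = 0 \<or> n = f \<or> n = 2*f" by auto
qed auto

lemma cc_Suc: assumes "0 < f" "k < 2*f" "j < f"
  shows "cc f (Suc k) j = cc f k j + (if (k + j) mod f = 0 then 1 else 0)"
  using mod0_iff[OF assms(1), of "k+j"] assms unfolding cc_def by auto

lemma snd_mu: "i < f \<Longrightarrow> snd (mu p f ! i) = (if i = 0 then 1 else -1)"
  by (simp add: mu_def)

lemma sign_mu_pow: assumes "0 < f" "j < f"
  shows "k \<le> 2*f \<Longrightarrow> snd (mu_pow p f k ! j) = (-1)^(k + cc f k j)"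
proof (induction k)
  case 0
  then show ?case using assms by (simp add: cc_def)
next
  case (Suc k)
  have lm: "length (mu p f) = f" by (simp add: mu_def)
  have "mu_pow p f (Suc k) ! j = lcomp (rotate k (mu p f) ! j) (mu_pow p f k ! j)"
    using assms len_mu_pow[of p f k] lm by (simp add: tcomp_def)
  then have "snd (mu_pow p f (Suc k) ! j) = snd (mu p f ! ((k + j) mod f)) * (-1)^(k + cc f k j)"
    using Suc assms lm by (simp add: lcomp_def nth_rotate)
  also have "\<dots> = (-1)^(Suc k + cc f (Suc k) j)"
    using cc_Suc[of f k j] Suc assms snd_mu[of "(k+j) mod f" f p] by auto
  finally show ?case .
qed

definition val :: "nat \<Rightarrow> nat \<Rightarrow> nat \<Rightarrow> nat" where
  "val f k j = (if even (k + cc f k j) then 0 else 1)"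

lemma m_tup_nth: assumes "0 < f" "j < f" "k \<le> 2*f"
  shows "m_tup p f k ! j = val f k j"
  using sign_mu_pow[OF assms] assms len_mu_pow[of p f k]
  by (simp add: m_tup_def val_def)

lemma m_tup_eq: assumes "0 < f" "k \<le> 2*f"
  shows "m_tup p f k = map (val f k) [0..<f]"
  by (rule nth_equalityI) (use assms m_tup_nth len_mu_pow in \<open>auto simp: m_tup_def\<close>)


lemma modc: assumes "0 < (f::nat)" "n < 3*f"
  shows "n mod f = (if n < f then n else if n < 2*f then n - f else n - 2*f)"
proof -
  have a: "(n - f) mod f = n mod f" if "f \<le> n" for n using that by (metis le_mod_geq)
  show ?thesis using assms a[of n] a[of "n-f"] by (auto simp: mod_if)
qed



lemma val_lo: "1 \<le> k \<Longrightarrow> k \<le> f \<Longrightarrow> j < f \<Longrightarrow>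
   val f k j = (if (j = 0 \<or> f < k + j) = odd k then 0 else 1)"
  unfolding val_def cc_def by auto

lemma val_hi: "f < k \<Longrightarrow> k \<le> 2*f \<Longrightarrow> j < f \<Longrightarrow>
   val f k j = (if (j = 0 \<or> 2*f < k + j) = odd k then 1 else 0)"
  unfolding val_def cc_def by auto

lemma val_0: "j < f \<Longrightarrow> val f 0 j = 0"
  unfolding val_def cc_def by auto


lemma part1_pt: assumes "1 < f" "j < f" "1 \<le> k" "k \<le> ell f"
  shows "val f k j = val f (ell f - k) ((k + j) mod f)"
proof -
  have kf: "k \<le> 2*f" using assms by (auto simp: ell_def split: if_splits)
  have rl: "(k+j) mod f < f" using assms by simp
  consider (a) "k + j < f" "(k+j) mod f = k + j" | (b) "f \<le> k + j" "k + j < 2*f" "(k+j) mod f = k + j - f"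
     | (c) "2*f \<le> k + j" "(k+j) mod f = k + j - 2*f"
    using modc[of f "k+j"] assms kf by (auto split: if_splits)
  note cs = this
  show ?thesis
  proof (cases "odd f")
    case True
    then have l: "ell f = f" by (simp add: ell_def)
    show ?thesis
    proof (cases "k = f")
      case True
      then show ?thesis using l assms rl \<open>odd f\<close> by (auto simp add: val_0 val_lo)
    next
      case False
      then have kl: "k < f" "1 \<le> f - k" "f - k \<le> f" using assms l by auto
      have par: "odd (f - k) = even k" using \<open>odd f\<close> kl by (simp add: even_diff_nat)
      from cs show ?thesis
        by cases (use assms kl l par rl \<open>odd f\<close> in \<open>auto simp add: val_lo\<close>)
    qed
  next
    case False
    then have l: "ell f = 2*f" by (simp add: ell_def)
    have par: "odd (2*f - k) = odd k" using kf by (simp add: even_diff_nat)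
    consider "k < f" | "k = f" | "f < k" "k < 2*f" | "k = 2*f" using kf by linarith
    then show ?thesis
    proof cases
      case 1
      from cs show ?thesis
        by cases (use assms l par rl 1 in \<open>auto simp add: val_lo val_hi\<close>)
    next
      case 2
      from cs show ?thesis
        by cases (use assms l par rl 2 in \<open>auto simp add: val_lo val_hi\<close>)
    next
      case 3
      from cs show ?thesis
        by cases (use assms l par rl 3 in \<open>auto simp add: val_lo val_hi\<close>)
    next
      case 4
      then show ?thesis using l assms rl by (auto simp add: val_0 val_hi)
    qed
  qed
qed



lemma vlo: assumes "1 \<le> k" "k \<le> f" "j < f"
  shows "(val f k j = 1) = ((j = 0 \<or> f < k + j) \<noteq> odd k)"
  using val_lo[OF assms] by auto

lemma vhi: assumes "f < k" "k \<le> 2*f" "j < f"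
  shows "(val f k j = 1) = ((j = 0 \<or> 2*f < k + j) = odd k)"
  using val_hi[OF assms] by auto

lemma val01: "val f k j = 0 \<or> val f k j = 1"
  by (simp add: val_def)

lemma val_eq: "(val f k a = val f k b) = ((val f k a = 1) = (val f k b = 1))"
  using val01[of f k a] val01[of f k b] by auto

lemma p3_lo: assumes "1 \<le> k" "k < f" "0 < i" "i < f" "val f k i = val f k 0"
  "val f k ((1 + i) mod f) = val f k 1" shows False
proof -
  have e1: "(val f k i = 1) = ((f < k + i) \<noteq> odd k)" using vlo[of k f i] assms by simp
  have e0: "(val f k 0 = 1) = (True \<noteq> odd k)" using vlo[of k f 0] assms by simp
  have A: "f < k + i" using assms(5) e1 e0 val_eq[of f k i 0] by auto
  have e1': "(val f k 1 = 1) = (False \<noteq> odd k)" using vlo[of k f 1] assms by simp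
  show False
  proof (cases "1 + i = f")
    case True
    then have "(1 + i) mod f = 0" by simp
    then show False using assms(6) e0 e1' val_eq[of f k 0 1] by auto
  next
    case False
    then have m: "(1 + i) mod f = 1 + i" using assms by simp
    have "1 + i < f" using False assms by simp
    then have "(val f k (1+i) = 1) = (True \<noteq> odd k)" using vlo[of k f "1+i"] assms A by simp
    then show False using assms(6) m e1' val_eq[of f k "1+i" 1] by auto
  qed
qed

lemma p3_hi: assumes "f < k" "k < 2*f" "0 < i" "i < f" "val f k i = val f k 0"
  "val f k ((1 + i) mod f) = val f k 1" shows False
proof -
  have e1: "(val f k i = 1) = ((2*f < k + i) = odd k)" using vhi[of f k i] assms by simp
  have e0: "(val f k 0 = 1) = (True = odd k)" using vhi[of f k 0] assms by simp
  have A: "2*f < k + i" using assms(5) e1 e0 val_eq[of f k i 0] by auto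
  have e1': "(val f k 1 = 1) = (False = odd k)" using vhi[of f k 1] assms by simp
  show False
  proof (cases "1 + i = f")
    case True
    then have "(1 + i) mod f = 0" by simp
    then show False using assms(6) e0 e1' val_eq[of f k 0 1] by auto
  next
    case False
    then have m: "(1 + i) mod f = 1 + i" using assms by simp
    have "1 + i < f" using False assms by simp
    then have "(val f k (1+i) = 1) = (True = odd k)" using vhi[of f k "1+i"] assms A by simp
    then show False using assms(6) m e1' val_eq[of f k "1+i" 1] by auto
  qed
qed

lemma part3_pt: assumes "1 < f" "1 \<le> k" "k \<le> ell f - 1" "even f \<longrightarrow> 2 * k \<noteq> ell f"
  "0 < i" "i < f" "val f k i = val f k 0" "val f k ((1 + i) mod f) = val f k 1"
  shows False
proof -
  have "k < f \<or> (f < k \<and> k < 2*f)"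
  proof (cases "odd f")
    case True then have "ell f = f" by (simp add: ell_def)
    then show ?thesis using assms(1,3) by linarith
  next
    case False then show ?thesis using assms(3,4) by (auto simp add: ell_def)
  qed
  then show False using p3_lo[of k f i] p3_hi[of f k i] assms by blast
qed



definition Nf :: "nat \<Rightarrow> nat \<Rightarrow> nat" where
  "Nf f k = (if k \<le> f then (if odd k then f - k else k) else (if odd k then k - f else 2*f - k))"

lemma set_eq_pt: "(\<And>j. j < f \<Longrightarrow> P j = (j \<in> S)) \<Longrightarrow> S \<subseteq> {..<f} \<Longrightarrow> {j. j < f \<and> P j} = S"
  by auto

lemma ca: assumes "1 < f" "1 \<le> k" "k \<le> f" "odd k" "j < f"
  shows "(val f k j = 1) = (j \<in> {1..f-k})"
proof -
  have "(val f k j = 1) = (\<not> (j = 0 \<or> f < k + j))" using vlo[of k f j] assms by simp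
  also have "\<dots> = (j \<in> {1..f-k})" using assms by auto
  finally show ?thesis .
qed

lemma cb: assumes "1 < f" "1 \<le> k" "k \<le> f" "even k" "j < f"
  shows "(val f k j = 1) = (j \<in> insert 0 {f-k+1..<f})"
proof -
  have "(val f k j = 1) = (j = 0 \<or> f < k + j)" using vlo[of k f j] assms by simp
  also have "\<dots> = (j \<in> insert 0 {f-k+1..<f})" using assms by auto
  finally show ?thesis .
qed

lemma cc': assumes "f < k" "k < 2*f" "odd k" "j < f"
  shows "(val f k j = 1) = (j \<in> insert 0 {2*f-k+1..<f})"
proof -
  have "(val f k j = 1) = (j = 0 \<or> 2*f < k + j)" using vhi[of f k j] assms by simp
  also have "\<dots> = (j \<in> insert 0 {2*f-k+1..<f})" using assms by auto
  finally show ?thesis .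
qed

lemma cd: assumes "f < k" "k < 2*f" "even k" "j < f"
  shows "(val f k j = 1) = (j \<in> {1..2*f-k})"
proof -
  have "(val f k j = 1) = (\<not> (j = 0 \<or> 2*f < k + j))" using vhi[of f k j] assms by simp
  also have "\<dots> = (j \<in> {1..2*f-k})" using assms by auto
  finally show ?thesis .
qed


lemma card_a: assumes "1 < f" "1 \<le> k" "k \<le> f" "odd k"
  shows "card {j. j < f \<and> val f k j = 1} = f - k"
proof -
  have "{j. j < f \<and> val f k j = 1} = {1..f-k}"
  proof (rule set_eq_pt)
    fix j assume "j < f" show "(val f k j = 1) = (j \<in> {1..f-k})" by (rule ca[OF assms \<open>j < f\<close>])
  next
    show "{1..f-k} \<subseteq> {..<f}" using assms by auto
  qed
  then show ?thesis by simp
qed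


lemma card_b: assumes "1 < f" "1 \<le> k" "k \<le> f" "even k"
  shows "card {j. j < f \<and> val f k j = 1} = k"
proof -
  have "{j. j < f \<and> val f k j = 1} = insert 0 {f-k+1..<f}"
  proof (rule set_eq_pt)
    fix j assume "j < f" show "(val f k j = 1) = (j \<in> insert 0 {f-k+1..<f})" by (rule cb[OF assms \<open>j < f\<close>])
  next
    show "insert 0 {f-k+1..<f} \<subseteq> {..<f}" using assms by auto
  qed
  moreover have "0 \<notin> {f-k+1..<f}" by simp
  moreover have "card {f-k+1..<f} = k - 1" using assms by simp
  ultimately show ?thesis using assms by simp
qed

lemma card_c: assumes "f < k" "k < 2*f" "odd k"
  shows "card {j. j < f \<and> val f k j = 1} = k - f"
proof -
  have "{j. j < f \<and> val f k j = 1} = insert 0 {2*f-k+1..<f}"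
  proof (rule set_eq_pt)
    fix j assume "j < f" show "(val f k j = 1) = (j \<in> insert 0 {2*f-k+1..<f})" by (rule cc'[OF assms \<open>j < f\<close>])
  next
    show "insert 0 {2*f-k+1..<f} \<subseteq> {..<f}" using assms by auto
  qed
  moreover have "0 \<notin> {2*f-k+1..<f}" by simp
  moreover have "card {2*f-k+1..<f} = k - f - 1" using assms by simp
  ultimately show ?thesis using assms by simp
qed

lemma card_d: assumes "f < k" "k < 2*f" "even k"
  shows "card {j. j < f \<and> val f k j = 1} = 2*f - k"
proof -
  have "{j. j < f \<and> val f k j = 1} = {1..2*f-k}"
  proof (rule set_eq_pt)
    fix j assume "j < f" show "(val f k j = 1) = (j \<in> {1..2*f-k})" by (rule cd[OF assms \<open>j < f\<close>])
  next
    show "{1..2*f-k} \<subseteq> {..<f}" using assms by auto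
  qed
  then show ?thesis by simp
qed

lemma card_ones: assumes "1 < f" "1 \<le> k" "k < 2*f"
  shows "card {j. j < f \<and> val f k j = 1} = Nf f k"
proof (cases "k \<le> f")
  case True
  then show ?thesis using card_a[OF assms(1,2) True] card_b[OF assms(1,2) True] by (simp add: Nf_def)
next
  case False
  then have fk: "f < k" by simp
  show ?thesis using card_c[OF fk assms(3)] card_d[OF fk assms(3)] False by (simp add: Nf_def)
qed

lemma count_map: "count (mset (map g [0..<f])) 1 = card {j. j < f \<and> g j = 1}"
proof -
  have "count (mset (map g [0..<f])) 1 = card {i. i < f \<and> 1 = map g [0..<f] ! i}"
    unfolding count_mset count_list_eq_length_filter length_filter_conv_card by simp
  also have "{i. i < f \<and> 1 = map g [0..<f] ! i} = {j. j < f \<and> g j = 1}" by auto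
  finally show ?thesis .
qed


lemma Nf_par: assumes "even f" "k < 2*f" shows "odd (Nf f k) = odd k"
proof (cases "k \<le> f")
  case True then show ?thesis using assms by (auto simp: Nf_def even_diff_nat)
next
  case False then show ?thesis using assms by (auto simp: Nf_def even_diff_nat)
qed

lemma part2_arith: assumes "1 < f" "1 \<le> k1" "k1 \<le> ell f - 1" "1 \<le> k2" "k2 \<le> ell f - 1" "k1 \<noteq> k2"
  "Nf f k1 = Nf f k2" shows "k2 = ell f - k1"
proof (cases "odd f")
  case True
  then have "ell f = f" by (simp add: ell_def)
  moreover have "k1 < f" "k2 < f" using assms calculation by auto
  ultimately show ?thesis using assms by (cases "odd k1"; cases "odd k2"; auto simp: Nf_def)
next
  case False
  then have l: "ell f = 2*f" by (simp add: ell_def)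
  have "odd k1 = odd k2" using Nf_par[of f k1] Nf_par[of f k2] assms l False by auto
  then show ?thesis using assms l by (cases "odd k1"; auto simp: Nf_def split: if_splits)
qed

lemma mset_rot: "mset (rotate n xs) = mset xs"
  by (metis append_take_drop_id mset_append rotate_drop_take union_commute)
theorem lemma2p1:
  fixes p f :: nat
  assumes "prime p" and "f > 1"
  shows "(\<forall>k. 1 \<le> k \<and> k \<le> ell f \<longrightarrow> m_tup p f k = rotate k (m_tup p f (ell f - k)))
    \<and> (\<forall>k1 k2. 1 \<le> k1 \<and> k1 \<le> ell f - 1 \<and> 1 \<le> k2 \<and> k2 \<le> ell f - 1 \<and> k1 \<noteq> k2 \<longrightarrow>
          ((\<exists>i. rotate i (m_tup p f k1) = m_tup p f k2) \<longleftrightarrow> k2 = ell f - k1))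
    \<and> (\<forall>k. 1 \<le> k \<and> k \<le> ell f - 1 \<and> (even f \<longrightarrow> 2 * k \<noteq> ell f) \<longrightarrow>
          (\<forall>i. 0 < i \<and> i < f \<longrightarrow> rotate i (m_tup p f k) \<noteq> m_tup p f k))"
proof -
  have f0: "0 < f" using assms by simp
  have lbound: "ell f \<le> 2*f" by (simp add: ell_def)
  have P1: "m_tup p f k = rotate k (m_tup p f (ell f - k))" if k: "1 \<le> k" "k \<le> ell f" for k
  proof -
    have e1: "m_tup p f k = map (val f k) [0..<f]" using m_tup_eq[OF f0] k lbound by simp
    have e2: "m_tup p f (ell f - k) = map (val f (ell f - k)) [0..<f]" using m_tup_eq[OF f0] k lbound by simp
    show ?thesis unfolding e1 e2
    proof (rule nth_equalityI)
      show "length (map (val f k) [0..<f]) = length (rotate k (map (val f (ell f - k)) [0..<f]))" by simp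
    next
      fix j assume "j < length (map (val f k) [0..<f])"
      then have j: "j < f" by simp
      have "rotate k (map (val f (ell f - k)) [0..<f]) ! j = val f (ell f - k) ((k + j) mod f)"
        using j f0 by (simp add: nth_rotate)
      then show "map (val f k) [0..<f] ! j = rotate k (map (val f (ell f - k)) [0..<f]) ! j"
        using part1_pt[of f j k] assms j k by simp
    qed
  qed
  have P2: "(\<exists>i. rotate i (m_tup p f k1) = m_tup p f k2) \<longleftrightarrow> k2 = ell f - k1"
    if k: "1 \<le> k1" "k1 \<le> ell f - 1" "1 \<le> k2" "k2 \<le> ell f - 1" "k1 \<noteq> k2" for k1 k2
  proof
    assume "\<exists>i. rotate i (m_tup p f k1) = m_tup p f k2"
    then obtain i where i: "rotate i (m_tup p f k1) = m_tup p f k2" by blast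
    have "mset (m_tup p f k2) = mset (m_tup p f k1)" using i[symmetric] by (simp add: mset_rot)
    then have "count (mset (m_tup p f k2)) 1 = count (mset (m_tup p f k1)) 1" by simp
    moreover have "m_tup p f k1 = map (val f k1) [0..<f]" using m_tup_eq[OF f0] k lbound by simp
    moreover have "m_tup p f k2 = map (val f k2) [0..<f]" using m_tup_eq[OF f0] k lbound by simp
    ultimately have "card {j. j < f \<and> val f k2 j = 1} = card {j. j < f \<and> val f k1 j = 1}"
      by (simp only: count_map)
    then have "Nf f k1 = Nf f k2" using card_ones[of f k1] card_ones[of f k2] assms k lbound by simp
    then show "k2 = ell f - k1" using part2_arith[of f k1 k2] assms k by simp
  next
    assume "k2 = ell f - k1"
    then have "ell f - k2 = k1" using k by simp
    then have "m_tup p f k2 = rotate k2 (m_tup p f k1)" using P1[of k2] k by simp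
    then show "\<exists>i. rotate i (m_tup p f k1) = m_tup p f k2" by metis
  qed
  have P3: "rotate i (m_tup p f k) \<noteq> m_tup p f k"
    if k: "1 \<le> k" "k \<le> ell f - 1" "even f \<longrightarrow> 2 * k \<noteq> ell f" and i: "0 < i" "i < f" for k i
  proof
    assume r: "rotate i (m_tup p f k) = m_tup p f k"
    have e: "m_tup p f k = map (val f k) [0..<f]" using m_tup_eq[OF f0] k lbound by simp
    have "rotate i (m_tup p f k) ! 0 = m_tup p f k ! 0" using r by simp
    then have a: "val f k i = val f k 0" using f0 i unfolding e by (simp add: nth_rotate)
    have "rotate i (m_tup p f k) ! 1 = m_tup p f k ! 1" using r by simp
    then have b: "val f k ((1 + i) mod f) = val f k 1" using f0 i assms unfolding e
      by (simp add: nth_rotate add.commute)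
    show False using part3_pt[of f k i] assms k i a b by simp
  qed
  show ?thesis
    apply (intro conjI allI impI)
    subgoal for k using P1[of k] by simp
    subgoal for k1 k2 using P2[of k1 k2] by simp
    subgoal for k i using P3[of k i] by simp
    done
qed


end
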